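(* For every integer $m\ge0$, $$A_{2m+1}(0,-1)=(-1)^m\frac{E_{2m+1}}{2^m},\qquad A_{2m+2}(0,-1)=(-1)^m\frac{E_{2m+3}}{2^{m+1}}.$$
   Context: For a permutation $\pi=a_1\cdots a_n$ of $[n]$, an index $i\in[n-1]$ is a descent if $a_i>a_{i+1}$; $\mathrm{odes}(\pi)$ and $\mathrm{edes}(\pi)$ count descents at odd and even positions. $A_n(p,q)=\sum_{\pi\in\mathfrak S_n}p^{\mathrm{odes}(\pi)}q^{\mathrm{edes}(\pi)}$. $E_n$ is the Euler number, the number of alternating permutations $a_1>a_2<a_3>\cdots$ in $\mathfrak S_n$; $\sum_{n\ge0}E_nt^n/n!=\tan t+\sec t$. *)

theory Defs
  imports Complex_Main "HOL-Combinatorics.Multiset_Permutations"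
begin

text \<open>Permutations of [n] = {1..n} are lists a_1 ... a_n (a_i = xs ! (i-1)).\<close>

definition perms :: "nat \<Rightarrow> nat list set" where
  "perms n = permutations_of_set {1..n}"

definition is_descent :: "nat list \<Rightarrow> nat \<Rightarrow> bool" where
  "is_descent xs i \<longleftrightarrow> 1 \<le> i \<and> i < length xs \<and> xs ! (i - 1) > xs ! i"

definition odes :: "nat list \<Rightarrow> nat" where
  "odes xs = card {i \<in> {1..<length xs}. odd i \<and> is_descent xs i}"

definition edes :: "nat list \<Rightarrow> nat" where
  "edes xs = card {i \<in> {1..<length xs}. even i \<and> is_descent xs i}"

definition A :: "nat \<Rightarrow> real \<Rightarrow> real \<Rightarrow> real" where
  "A n p q = (\<Sum>xs\<in>perms n. p ^ odes xs * q ^ edes xs)"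

definition alternating :: "nat list \<Rightarrow> bool" where
  "alternating xs \<longleftrightarrow> (\<forall>i \<in> {1..<length xs}.
      (odd i \<longrightarrow> xs ! (i - 1) > xs ! i) \<and> (even i \<longrightarrow> xs ! (i - 1) < xs ! i))"

definition euler_num :: "nat \<Rightarrow> nat" where
  "euler_num n = card {xs \<in> perms n. alternating xs}"

end

theory Submission
  imports Defs
begin


fun wr :: "(nat \<Rightarrow> nat \<Rightarrow> nat \<Rightarrow> real) \<Rightarrow> nat \<Rightarrow> nat list \<Rightarrow> real" where
  "wr c k [] = 1"
| "wr c k [x] = 1"
| "wr c k (x # y # zs) = c (Suc k) x y * wr c (Suc k) (y # zs)"

lemma wr_Cons: "wr c k (a # xs) = (if xs = [] then 1 else c (Suc k) a (hd xs)) * wr c (Suc k) xs"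
  by (cases xs) auto

lemma wr_split:
  "wr c k (l @ x # r) = wr c k l * (if l = [] then 1 else c (length l + k) (last l) x)
     * (if r = [] then 1 else c (Suc (length l + k)) x (hd r)) * wr c (Suc (length l + k)) r"
proof (induction l arbitrary: k)
  case Nil
  then show ?case by (simp add: wr_Cons)
next
  case (Cons a l)
  show ?case
  proof (cases l)
    case Nil
    then show ?thesis by (simp add: wr_Cons)
  next
    case (Cons b l')
    then show ?thesis using Cons.IH[of "Suc k"] by (simp add: wr_Cons)
  qed
qed

lemma wr_prod: "wr c k xs = (\<Prod>i\<in>{1..<length xs}. c (i + k) (xs ! (i - 1)) (xs ! i))"
proof (induction xs arbitrary: k)
  case Nil
  then show ?case by simp
next
  case (Cons a xs)
  show ?case
  proof (cases xs)
    case Nil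
    then show ?thesis by simp
  next
    case (Cons b ys)
    have "(\<Prod>i\<in>{1..<length (a # xs)}. c (i + k) ((a # xs) ! (i - 1)) ((a # xs) ! i))
        = c (1 + k) a b * (\<Prod>i\<in>{Suc 1..<Suc (length xs)}. c (i + k) ((a # xs) ! (i - 1)) ((a # xs) ! i))"
    proof -
      have "1 < length (a # xs)" using Cons by simp
      from prod.atLeast_Suc_lessThan[OF this, of "\<lambda>i. c (i + k) ((a # xs) ! (i - 1)) ((a # xs) ! i)"]
      show ?thesis using Cons by simp
    qed
    also have "(\<Prod>i\<in>{Suc 1..<Suc (length xs)}. c (i + k) ((a # xs) ! (i - 1)) ((a # xs) ! i))
        = (\<Prod>i\<in>{1..<length xs}. c (Suc i + k) ((a # xs) ! (Suc i - 1)) ((a # xs) ! Suc i))"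
      by (rule prod.shift_bounds_Suc_ivl)
    also have "\<dots> = (\<Prod>i\<in>{1..<length xs}. c (i + Suc k) (xs ! (i - 1)) (xs ! i))"
      by (intro prod.cong) auto
    finally show ?thesis using Cons.IH[of "Suc k"] Cons by (simp add: wr_Cons)
  qed
qed

lemma wr_shift:
  assumes "\<And>i a b. c (i + k) a b = c i a b"
  shows "wr c k xs = wr c 0 xs"
  by (simp add: wr_prod assms)



lemma perm_split_sum:
  fixes g :: "nat list \<Rightarrow> real"
  assumes fin: "finite S" and xS: "x \<in> S"
  shows "(\<Sum>xs\<in>permutations_of_set S. g xs) =
    (\<Sum>L\<in>Pow (S - {x}). \<Sum>l\<in>permutations_of_set L. \<Sum>r\<in>permutations_of_set (S - {x} - L). g (l @ x # r))"
proof -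
  let ?I = "Sigma (Pow (S - {x})) (\<lambda>L. permutations_of_set L \<times> permutations_of_set (S - {x} - L))"
  let ?h = "\<lambda>(L::nat set, (l::nat list, r::nat list)). l @ x # r"
  have bij: "bij_betw ?h ?I (permutations_of_set S)"
  proof (rule bij_betwI')
    fix a b assume a: "a \<in> ?I" and b: "b \<in> ?I"
    obtain L l r where aa: "a = (L, l, r)" by (cases a) auto
    obtain L' l' r' where bb: "b = (L', l', r')" by (cases b) auto
    have "x \<notin> set l" "x \<notin> set r" "set l = L" "set l' = L'"
      using a b unfolding aa bb by (auto simp: permutations_of_set_def)
    then show "(?h a = ?h b) = (a = b)" unfolding aa bb
      by (auto simp: append_Cons_eq_iff)
  next
    fix a assume a: "a \<in> ?I"
    obtain L l r where aa: "a = (L, l, r)" by (cases a) auto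
    show "?h a \<in> permutations_of_set S" using a xS unfolding aa
      by (auto simp: permutations_of_set_def)
  next
    fix xs assume xs: "xs \<in> permutations_of_set S"
    then have "x \<in> set xs" "distinct xs" "set xs = S" using xS by (auto simp: permutations_of_set_def)
    then obtain l r where lr: "xs = l @ x # r" using split_list by metis
    have "(set l, l, r) \<in> ?I" using \<open>distinct xs\<close> \<open>set xs = S\<close> unfolding lr
      by (auto simp: permutations_of_set_def)
    then show "\<exists>a\<in>?I. xs = ?h a" using lr by force
  qed
  have "(\<Sum>xs\<in>permutations_of_set S. g xs) = (\<Sum>a\<in>?I. g (?h a))"
    using sum.reindex_bij_betw[OF bij, of g] by simp
  also have "\<dots> = (\<Sum>L\<in>Pow (S - {x}). \<Sum>p\<in>permutations_of_set L \<times> permutations_of_set (S - {x} - L). g (fst p @ x # snd p))"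
    using fin by (subst sum.Sigma) (auto simp: case_prod_beta)
  also have "\<dots> = (\<Sum>L\<in>Pow (S - {x}). \<Sum>l\<in>permutations_of_set L. \<Sum>r\<in>permutations_of_set (S - {x} - L). g (l @ x # r))"
    by (simp add: sum.cartesian_product case_prod_beta)
  finally show ?thesis .
qed

lemma sum_pow_card:
  fixes G :: "nat \<Rightarrow> real"
  assumes "finite U"
  shows "(\<Sum>L\<in>Pow U. G (card L)) = (\<Sum>k\<le>card U. real (card U choose k) * G k)"
proof -
  have "(\<Sum>L\<in>Pow U. G (card L)) = (\<Sum>k\<le>card U. \<Sum>L\<in>{L. L \<in> Pow U \<and> card L = k}. G (card L))"
    using assms by (intro sum.group[symmetric]) (auto intro: card_mono)
  also have "\<dots> = (\<Sum>k\<le>card U. real (card U choose k) * G k)"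
  proof (intro sum.cong refl)
    fix k
    have "{L. L \<in> Pow U \<and> card L = k} = {B. B \<subseteq> U \<and> card B = k}" by auto
    then have "card {L. L \<in> Pow U \<and> card L = k} = card U choose k" using n_subsets[OF assms] by simp
    then show "(\<Sum>L\<in>{L. L \<in> Pow U \<and> card L = k}. G (card L)) = real (card U choose k) * G k"
      by simp
  qed
  finally show ?thesis .
qed



definition c1 :: "nat \<Rightarrow> nat \<Rightarrow> nat \<Rightarrow> real" where
  "c1 i a b = (if b < a then (if odd i then 0 else -1) else 1)"
definition c2 :: "nat \<Rightarrow> nat \<Rightarrow> nat \<Rightarrow> real" where
  "c2 i a b = (if (odd i \<longrightarrow> b < a) \<and> (even i \<longrightarrow> a < b) then 1 else 0)"

definition FF :: "(nat \<Rightarrow> nat \<Rightarrow> nat \<Rightarrow> real) \<Rightarrow> nat set \<Rightarrow> real" where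
  "FF c S = (\<Sum>xs\<in>permutations_of_set S. wr c 0 xs)"

definition ff :: "nat \<Rightarrow> real" where "ff n = FF c1 {1..n}"
definition ee :: "nat \<Rightarrow> real" where "ee n = FF c2 {1..n}"

definition G1 :: "nat \<Rightarrow> nat \<Rightarrow> real" where
  "G1 n k = (if k = n then ff k else if even k then 0 else - (ff k * ff (n - k)))"
definition G2 :: "nat \<Rightarrow> nat \<Rightarrow> real" where
  "G2 n k = (if odd k then ee k * ee (n - k) else if n = 0 then 1 else 0)"

lemma perm_set: "xs \<in> permutations_of_set S \<Longrightarrow> set xs = S \<and> distinct xs"
  by (simp add: permutations_of_set_def)

lemma rec1:
  assumes fin: "finite S" and cS: "card S = Suc n"
    and IH: "\<And>T. finite T \<Longrightarrow> card T \<le> n \<Longrightarrow> FF c1 T = ff (card T)"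
  shows "FF c1 S = (\<Sum>k\<le>n. real (n choose k) * G1 n k)"
proof -
  have ne: "S \<noteq> {}" using cS by auto
  define x where "x = Max S"
  have xS: "x \<in> S" using fin ne x_def by simp
  define U where "U = S - {x}"
  have finU: "finite U" using fin U_def by simp
  have cU: "card U = n" using cS xS fin U_def by simp
  have Ux: "\<And>y. y \<in> U \<Longrightarrow> y < x" using fin U_def x_def
    by (metis Diff_iff Max_ge insertCI le_neq_implies_less singleton_iff)
  have sh: "\<And>k. odd k \<Longrightarrow> wr c1 (Suc k) r = wr c1 0 r" for r
    by (rule wr_shift) (auto simp: c1_def)
  have inner: "(\<Sum>l\<in>permutations_of_set L. \<Sum>r\<in>permutations_of_set (U - L). wr c1 0 (l @ x # r))
      = G1 n (card L)" if L: "L \<in> Pow U" for L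
  proof -
    have finL: "finite L" using L finU by (auto intro: finite_subset)
    have cUL: "card (U - L) = n - card L" using L finU cU by (simp add: card_Diff_subset finL)
    have val: "wr c1 0 (l @ x # r) = (if U - L = {} then wr c1 0 l else if even (card L) then 0
                else - (wr c1 0 l * wr c1 0 r))"
      if l: "l \<in> permutations_of_set L" and r: "r \<in> permutations_of_set (U - L)" for l r
    proof -
      have sl: "set l = L" "distinct l" and sr: "set r = U - L" "distinct r" using l r perm_set by auto
      have len: "length l = card L" using sl by (metis distinct_card)
      have lx: "l \<noteq> [] \<Longrightarrow> c1 (length l) (last l) x = 1"
      proof -
        assume "l \<noteq> []"
        then have "last l \<in> U" using L sl last_in_set[of l] by auto
        then have "last l < x" using Ux by blast
        then show ?thesis by (simp add: c1_def)
      qed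
      have rx: "r \<noteq> [] \<Longrightarrow> c1 (Suc (length l)) x (hd r) = (if odd (Suc (length l)) then 0 else -1)"
      proof -
        assume "r \<noteq> []"
        then have "hd r \<in> U" using sr hd_in_set[of r] by auto
        then have "hd r < x" using Ux by blast
        then show ?thesis by (simp add: c1_def)
      qed
      have rne: "(r = []) = (U - L = {})" using sr by (metis set_empty)
      show ?thesis
        using wr_split[of c1 0 l x r] lx rx rne sh[of "length l" r] len
        by (cases "l = []") (auto split: if_splits)
    qed
    show ?thesis
    proof (cases "U - L = {}")
      case True
      then have "card L = n" using cUL L cU by (metis Diff_eq_empty_iff Pow_iff subset_antisym)
      have pe: "permutations_of_set (U - L) = {[]}" using True by (metis permutations_of_set_empty)
      have "(\<Sum>l\<in>permutations_of_set L. \<Sum>r\<in>permutations_of_set (U - L). wr c1 0 (l @ x # r))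
           = (\<Sum>l\<in>permutations_of_set L. wr c1 0 l)"
        unfolding pe using val True pe by (intro sum.cong refl) auto
      then show ?thesis using IH[OF finL] \<open>card L = n\<close> by (simp add: FF_def G1_def)
    next
      case False
      then have "card L \<noteq> n" using cUL L finU
        by (metis Diff_eq_empty_iff Pow_iff card_seteq cU order_refl)
      have "card L \<le> n" using L finU cU card_mono by auto
      have "(\<Sum>l\<in>permutations_of_set L. \<Sum>r\<in>permutations_of_set (U - L). wr c1 0 (l @ x # r))
         = (\<Sum>l\<in>permutations_of_set L. \<Sum>r\<in>permutations_of_set (U - L).
              (if even (card L) then 0 else - (wr c1 0 l * wr c1 0 r)))"
        using val False by (intro sum.cong refl) auto
      also have "\<dots> = (if even (card L) then 0 else - (FF c1 L * FF c1 (U - L)))"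
        by (simp add: FF_def sum_product sum_negf)
      also have "\<dots> = G1 n (card L)"
        using IH[OF finL \<open>card L \<le> n\<close>] IH[of "U - L"] finU cUL \<open>card L \<noteq> n\<close>
        by (simp add: G1_def)
      finally show ?thesis .
    qed
  qed
  have "FF c1 S = (\<Sum>L\<in>Pow U. G1 n (card L))"
    unfolding FF_def perm_split_sum[OF fin xS] U_def[symmetric]
    using inner by (intro sum.cong refl) auto
  also have "\<dots> = (\<Sum>k\<le>n. real (n choose k) * G1 n k)"
    using sum_pow_card[OF finU] cU by simp
  finally show ?thesis .
qed

lemma rec2:
  assumes fin: "finite S" and cS: "card S = Suc n"
    and IH: "\<And>T. finite T \<Longrightarrow> card T \<le> n \<Longrightarrow> FF c2 T = ee (card T)"
  shows "FF c2 S = (\<Sum>k\<le>n. real (n choose k) * G2 n k)"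
proof -
  have ne: "S \<noteq> {}" using cS by auto
  define x where "x = Min S"
  have xS: "x \<in> S" using fin ne x_def by simp
  define U where "U = S - {x}"
  have finU: "finite U" using fin U_def by simp
  have cU: "card U = n" using cS xS fin U_def by simp
  have Ux: "\<And>y. y \<in> U \<Longrightarrow> x < y" using fin U_def x_def
    by (metis Diff_iff Min_le insertCI le_neq_implies_less singleton_iff)
  have sh: "\<And>k. odd k \<Longrightarrow> wr c2 (Suc k) r = wr c2 0 r" for r
    by (rule wr_shift) (auto simp: c2_def)
  have inner: "(\<Sum>l\<in>permutations_of_set L. \<Sum>r\<in>permutations_of_set (U - L). wr c2 0 (l @ x # r))
      = G2 n (card L)" if L: "L \<in> Pow U" for L
  proof -
    have finL: "finite L" using L finU by (auto intro: finite_subset)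
    have cUL: "card (U - L) = n - card L" using L finU cU by (simp add: card_Diff_subset finL)
    have "card L \<le> n" using L finU cU card_mono by auto
    have val: "wr c2 0 (l @ x # r) = (if odd (card L) then wr c2 0 l * wr c2 0 r
                else if L = {} \<and> U - L = {} then 1 else 0)"
      if l: "l \<in> permutations_of_set L" and r: "r \<in> permutations_of_set (U - L)" for l r
    proof -
      have sl: "set l = L" "distinct l" and sr: "set r = U - L" "distinct r" using l r perm_set by auto
      have len: "length l = card L" using sl by (metis distinct_card)
      have lx: "l \<noteq> [] \<Longrightarrow> c2 (length l) (last l) x = (if odd (length l) then 1 else 0)"
      proof -
        assume "l \<noteq> []"
        then have "last l \<in> U" using L sl last_in_set[of l] by auto
        then have "x < last l" using Ux by blast
        then show ?thesis by (simp add: c2_def)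
      qed
      have rx: "r \<noteq> [] \<Longrightarrow> c2 (Suc (length l)) x (hd r) = (if odd (length l) then 1 else 0)"
      proof -
        assume "r \<noteq> []"
        then have "hd r \<in> U" using sr hd_in_set[of r] by auto
        then have "x < hd r" using Ux by blast
        then show ?thesis by (simp add: c2_def)
      qed
      have rne: "(r = []) = (U - L = {})" using sr by (metis set_empty)
      have lne: "(l = []) = (L = {})" using sl by (metis set_empty)
      show ?thesis
      proof (cases "odd (card L)")
        case True
        then have "l \<noteq> []" using len by auto
        then show ?thesis using wr_split[of c2 0 l x r] lx rx sh[of "length l" r] len True
          by (cases "r = []") simp_all
      next
        case False
        show ?thesis
        proof (cases "l = []")
          case True
          then show ?thesis using wr_split[of c2 0 l x r] rx rne lne
            by (cases "r = []") simp_all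
        next
          case ln: False
          then show ?thesis using wr_split[of c2 0 l x r] lx lne len False by simp
        qed
      qed
    qed
    show ?thesis
    proof (cases "odd (card L)")
      case True
      have "(\<Sum>l\<in>permutations_of_set L. \<Sum>r\<in>permutations_of_set (U - L). wr c2 0 (l @ x # r))
         = (\<Sum>l\<in>permutations_of_set L. \<Sum>r\<in>permutations_of_set (U - L). wr c2 0 l * wr c2 0 r)"
        using val True by (intro sum.cong refl) auto
      also have "\<dots> = FF c2 L * FF c2 (U - L)"
        by (simp add: FF_def sum_product)
      also have "\<dots> = G2 n (card L)"
        using IH[OF finL \<open>card L \<le> n\<close>] IH[of "U - L"] finU cUL True
        by (simp add: G2_def)
      finally show ?thesis .
    next
      case False
      show ?thesis
      proof (cases "n = 0")
        case True
        then have "U = {}" using cU finU by simp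
        then have "L = {}" using L by auto
        then show ?thesis using val \<open>U = {}\<close> True by (simp add: G2_def)
      next
        case n0: False
        then have "\<not> (L = {} \<and> U - L = {})" using cU by auto
        then have "(\<Sum>l\<in>permutations_of_set L. \<Sum>r\<in>permutations_of_set (U - L). wr c2 0 (l @ x # r))
           = (\<Sum>l\<in>permutations_of_set L. \<Sum>r\<in>permutations_of_set (U - L). 0)"
          using val False by (intro sum.cong refl) auto
        then show ?thesis using False n0 by (simp add: G2_def)
      qed
    qed
  qed
  have "FF c2 S = (\<Sum>L\<in>Pow U. G2 n (card L))"
    unfolding FF_def perm_split_sum[OF fin xS] U_def[symmetric]
    using inner by (intro sum.cong refl) auto
  also have "\<dots> = (\<Sum>k\<le>n. real (n choose k) * G2 n k)"
    using sum_pow_card[OF finU] cU by simp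
  finally show ?thesis .
qed


lemma FF_card:
  fixes H :: "nat \<Rightarrow> real"
  assumes A: "\<And>S n. finite S \<Longrightarrow> card S = Suc n \<Longrightarrow> (\<And>T. finite T \<Longrightarrow> card T \<le> n \<Longrightarrow> FF c T = FF c {1..card T})
     \<Longrightarrow> FF c S = H n"
  shows "\<forall>S. finite S \<longrightarrow> card S = N \<longrightarrow> FF c S = FF c {1..card S}"
proof (induction N rule: less_induct)
  case (less N)
  show ?case
  proof (intro allI impI)
    fix S :: "nat set" assume fS: "finite S" and cS: "card S = N"
    show "FF c S = FF c {1..card S}"
    proof (cases N)
      case 0
      then have "S = {}" using fS cS by simp
      then show ?thesis by simp
    next
      case (Suc n)
      have ih: "FF c T = FF c {1..card T}" if "finite T" "card T \<le> n" for T
      proof -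
        have "card T < N" using that Suc by simp
        from less[OF this] that show ?thesis by blast
      qed
      have "FF c S = H n" using A[OF fS _ ih] cS Suc by blast
      moreover have "FF c {1..card S} = H n" using A[of "{1..card S}" n, OF _ _ ih] cS Suc by simp
      ultimately show ?thesis by simp
    qed
  qed
qed
lemma ff_gen: "finite S \<Longrightarrow> FF c1 S = ff (card S)"
proof -
  assume fS: "finite S"
  have "\<forall>S. finite S \<longrightarrow> card S = card S' \<longrightarrow> FF c1 S = FF c1 {1..card S}" for S'
  proof (rule FF_card[where H="\<lambda>n. \<Sum>k\<le>n. real (n choose k) * G1 n k"])
    fix S :: "nat set" and n
    assume "finite S" "card S = Suc n" and ih: "\<And>T. finite T \<Longrightarrow> card T \<le> n \<Longrightarrow> FF c1 T = FF c1 {1..card T}"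
    show "FF c1 S = (\<Sum>k\<le>n. real (n choose k) * G1 n k)"
      by (rule rec1[OF \<open>finite S\<close> \<open>card S = Suc n\<close>]) (use ih in \<open>unfold ff_def, blast\<close>)
  qed
  from this[of S] show ?thesis using fS unfolding ff_def by blast
qed

lemma ee_gen: "finite S \<Longrightarrow> FF c2 S = ee (card S)"
proof -
  assume fS: "finite S"
  have "\<forall>S. finite S \<longrightarrow> card S = card S' \<longrightarrow> FF c2 S = FF c2 {1..card S}" for S'
  proof (rule FF_card[where H="\<lambda>n. \<Sum>k\<le>n. real (n choose k) * G2 n k"])
    fix S :: "nat set" and n
    assume "finite S" "card S = Suc n" and ih: "\<And>T. finite T \<Longrightarrow> card T \<le> n \<Longrightarrow> FF c2 T = FF c2 {1..card T}"
    show "FF c2 S = (\<Sum>k\<le>n. real (n choose k) * G2 n k)"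
      by (rule rec2[OF \<open>finite S\<close> \<open>card S = Suc n\<close>]) (use ih in \<open>unfold ee_def, blast\<close>)
  qed
  from this[of S] show ?thesis using fS unfolding ee_def by blast
qed

lemma ff_rec: "ff (Suc n) = (\<Sum>k\<le>n. real (n choose k) * G1 n k)"
  unfolding ff_def[of "Suc n"] by (rule rec1) (simp_all add: ff_gen)

lemma ee_rec: "ee (Suc n) = (\<Sum>k\<le>n. real (n choose k) * G2 n k)"
  unfolding ee_def[of "Suc n"] by (rule rec2) (simp_all add: ee_gen)

lemma FF_empty: "FF c {} = 1" by (simp add: FF_def)
lemma ff0: "ff 0 = 1" and ee0: "ee 0 = 1" by (simp_all add: ff_def ee_def FF_def)


lemma sum_atMost_split_last:
  fixes n :: nat and g :: "nat \<Rightarrow> 'a::comm_monoid_add"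
  shows "(\<Sum>k\<le>n. g k) = g n + (\<Sum>k<n. g k)"
proof -
  have "sum g {..<Suc n} = sum g {..<n} + g n" by (rule sum.lessThan_Suc)
  then show ?thesis by (simp add: lessThan_Suc_atMost add.commute)
qed

lemma ff_rec': "ff (Suc n) = ff n + (\<Sum>k<n. real (n choose k) * (if even k then 0 else - (ff k * ff (n - k))))"
proof -
  have "ff (Suc n) = real (n choose n) * G1 n n + (\<Sum>k<n. real (n choose k) * G1 n k)"
    unfolding ff_rec by (rule sum_atMost_split_last)
  also have "(\<Sum>k<n. real (n choose k) * G1 n k) = (\<Sum>k<n. real (n choose k) * (if even k then 0 else - (ff k * ff (n - k))))"
    by (intro sum.cong refl) (simp add: G1_def)
  finally show ?thesis by (simp add: G1_def)
qed

lemma ee_rec': "n \<noteq> 0 \<Longrightarrow> ee (Suc n) = (\<Sum>k\<le>n. real (n choose k) * (if odd k then ee k * ee (n - k) else 0))"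
  unfolding ee_rec by (intro sum.cong refl) (simp add: G2_def)

lemma ee1: "ee 1 = 1"
proof -
  have "ee (Suc 0) = real (0 choose 0) * G2 0 0" using ee_rec[of 0] by simp
  then show ?thesis by (simp add: G2_def ee0)
qed

lemma pascal:
  fixes X :: "nat \<Rightarrow> real"
  assumes M: "odd M" and sym: "\<And>k. k \<le> Suc M \<Longrightarrow> X (Suc M - k) = X k"
  shows "(\<Sum>k\<le>Suc M. real (Suc M choose k) * (if odd k then X k else 0))
       = 2 * (\<Sum>k\<le>M. real (M choose k) * (if odd k then X k else 0))"
proof -
  define Y where "Y k = (if odd k then X k else 0)" for k
  have Y0: "Y 0 = 0" by (simp add: Y_def)
  have "(\<Sum>k\<le>Suc M. real (Suc M choose k) * Y k) = (\<Sum>k\<le>M. real (Suc M choose Suc k) * Y (Suc k))"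
    by (subst sum.atMost_Suc_shift) (simp add: Y0)
  also have "\<dots> = (\<Sum>k\<le>M. real (M choose Suc k) * Y (Suc k)) + (\<Sum>k\<le>M. real (M choose k) * Y (Suc k))"
    by (simp add: sum.distrib[symmetric] algebra_simps)
  also have "(\<Sum>k\<le>M. real (M choose Suc k) * Y (Suc k)) = (\<Sum>k\<le>M. real (M choose k) * Y k)"
  proof -
    have "(\<Sum>k\<le>Suc M. real (M choose k) * Y k) = (\<Sum>k\<le>M. real (M choose Suc k) * Y (Suc k))"
      by (subst sum.atMost_Suc_shift) (simp add: Y0)
    moreover have "(\<Sum>k\<le>Suc M. real (M choose k) * Y k) = (\<Sum>k\<le>M. real (M choose k) * Y k)"
      by simp
    ultimately show ?thesis by simp
  qed
  also have "(\<Sum>k\<le>M. real (M choose k) * Y (Suc k)) = (\<Sum>k\<le>M. real (M choose k) * Y k)"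
  proof -
    have "(\<Sum>k\<le>M. real (M choose k) * Y (Suc k)) = (\<Sum>k=0..M. real (M choose k) * Y (Suc k))"
      by (simp add: atLeast0AtMost)
    also have "\<dots> = (\<Sum>k=0..M. real (M choose (M + 0 - k)) * Y (Suc (M + 0 - k)))"
      by (rule sum.atLeastAtMost_rev)
    also have "\<dots> = (\<Sum>k=0..M. real (M choose k) * Y k)"
    proof (intro sum.cong refl)
      fix k assume k: "k \<in> {0..M}"
      have "Y (Suc (M - k)) = Y k"
      proof -
        have "Suc (M - k) = Suc M - k" using k by auto
        moreover have "odd (Suc M - k) = odd k" using k M by auto
        ultimately show ?thesis using sym[of k] k by (simp add: Y_def)
      qed
      then show "real (M choose (M + 0 - k)) * Y (Suc (M + 0 - k)) = real (M choose k) * Y k"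
        using k by (simp add: binomial_symmetric[symmetric])
    qed
    finally show ?thesis by (simp add: atLeast0AtMost)
  qed
  finally show ?thesis by (simp add: Y_def)
qed



lemma main_ind:
  "ff (2*m+1) = (-1)^m * ee (2*m+1) / 2^m \<and> ff (2*m+2) = (-1)^m * ee (2*m+3) / 2^(m+1)"
proof (induction m rule: less_induct)
  case (less m)
  have IH1: "\<And>a. a < m \<Longrightarrow> ff (2*a+1) = (-1)^a * ee (2*a+1) / 2^a" using less by blast
  have IH2: "\<And>a. a < m \<Longrightarrow> ff (2*a+2) = (-1)^a * ee (2*a+3) / 2^(a+1)" using less by blast
  define q :: real where "q = (-1)^m / 2^m"
  have odd_part: "ff (2*m+1) = q * ee (2*m+1)"
  proof (cases m)
    case 0
    then show ?thesis using ff_rec'[of 0] ff0 ee1 by (simp add: q_def)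
  next
    case (Suc p)
    have pw: "ff k * ff (2*m - k) = - 2 * q * (ee k * ee (2*m - k))" if k: "odd k" "k < 2*m" for k
    proof -
      obtain a where a: "k = 2*a+1" using k by (metis oddE)
      define b where "b = m - 1 - a"
      have am: "a < m" "b < m" using a k b_def by auto
      have kb: "2*m - k = 2*b+1" using a k b_def by auto
      have ab: "a + b = p" using a k b_def Suc by auto
      have "ff k * ff (2*m - k) = ((-1)^a * ee k / 2^a) * ((-1)^b * ee (2*m-k) / 2^b)"
        using IH1[OF am(1)] IH1[OF am(2)] a kb by simp
      also have "\<dots> = (-1)^(a+b) * (ee k * ee (2*m-k)) / 2^(a+b)"
        by (simp add: power_add)
      also have "\<dots> = - 2 * q * (ee k * ee (2*m - k))"
        using ab Suc by (simp add: q_def field_simps)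
      finally show ?thesis .
    qed
    have "ff (2*m+1) = ff (2*m) + (\<Sum>k<2*m. real (2*m choose k) * (if even k then 0 else - (ff k * ff (2*m - k))))"
      using ff_rec'[of "2*m"] by simp
    also have "(\<Sum>k<2*m. real (2*m choose k) * (if even k then 0 else - (ff k * ff (2*m - k))))
        = 2 * q * (\<Sum>k<2*m. real (2*m choose k) * (if odd k then ee k * ee (2*m - k) else 0))"
      by (subst sum_distrib_left, intro sum.cong refl) (auto simp: pw)
    also have "(\<Sum>k<2*m. real (2*m choose k) * (if odd k then ee k * ee (2*m - k) else 0)) = ee (2*m+1)"
      using ee_rec'[of "2*m"] Suc by (simp add: sum_atMost_split_last)
    also have "ff (2*m) = - q * ee (2*m+1)"
    proof -
      have "ff (2*m) = ff (2*p+2)" using Suc by simp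
      also have "\<dots> = (-1)^p * ee (2*p+3) / 2^(p+1)" using IH2[of p] Suc by simp
      also have "\<dots> = - q * ee (2*m+1)"
      proof -
        have e: "2*p+3 = 2*m+1" using Suc by simp
        show ?thesis unfolding e using Suc by (simp add: q_def field_simps)
      qed
      finally show ?thesis .
    qed
    finally show ?thesis by simp
  qed
  have even_part: "ff (2*m+2) = q * ee (2*m+3) / 2"
  proof -
    have pw: "ff k * ff (2*m+1 - k) = - q * (ee k * ee (2*m+2 - k))" if k: "odd k" "k < 2*m+1" for k
    proof -
      obtain a where a: "k = 2*a+1" using k by (metis oddE)
      define b where "b = m - 1 - a"
      have am: "a < m" "b < m" using a k b_def by auto
      have kb: "2*m+1 - k = 2*b+2" "2*m+2-k = 2*b+3" using a k b_def by auto
      have ab: "a + b + 1 = m" using a k b_def by auto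
      have "ff k * ff (2*m+1 - k) = ((-1)^a * ee k / 2^a) * ((-1)^b * ee (2*m+2-k) / 2^(b+1))"
        using IH1[OF am(1)] IH2[OF am(2)] a kb by simp
      also have "\<dots> = (-1)^(a+b) * (ee k * ee (2*m+2-k)) / 2^(a+b+1)"
        by (simp add: power_add field_simps)
      also have "\<dots> = - q * (ee k * ee (2*m+2 - k))"
        using ab[symmetric] by (simp add: q_def field_simps power_add)
      finally show ?thesis .
    qed
    have pw': "- (ff k * ff (Suc (2*m) - k)) = q * (ee k * ee (Suc (Suc (2*m)) - k))"
      if "odd k" "k < Suc (2*m)" for k using pw[of k] that by simp
    define S where "S = (\<Sum>k<2*m+1. real (2*m+1 choose k) * (if odd k then ee k * ee (2*m+2 - k) else 0))"
    have "ff (2*m+2) = ff (2*m+1) + (\<Sum>k<2*m+1. real (2*m+1 choose k) * (if even k then 0 else - (ff k * ff (2*m+1 - k))))"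
      using ff_rec'[of "2*m+1"] by simp
    also have "(\<Sum>k<2*m+1. real (2*m+1 choose k) * (if even k then 0 else - (ff k * ff (2*m+1 - k)))) = q * S"
      unfolding S_def by (subst sum_distrib_left, intro sum.cong refl) (auto simp: pw')
    finally have A: "ff (2*m+2) = q * (ee (2*m+1) + S)" using odd_part by (simp add: algebra_simps)
    have "ee (2*m+3) = ee (Suc (Suc (2*m+1)))" by (simp add: numeral_3_eq_3)
    also have "\<dots> = (\<Sum>k\<le>Suc (2*m+1). real (Suc (2*m+1) choose k) * (if odd k then ee k * ee (Suc (2*m+1) - k) else 0))"
      by (rule ee_rec') simp
    also have "\<dots> = 2 * (\<Sum>k\<le>2*m+1. real (2*m+1 choose k) * (if odd k then ee k * ee (Suc (2*m+1) - k) else 0))"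
      by (rule pascal) (auto simp: Suc_diff_le)
    also have "(\<Sum>k\<le>2*m+1. real (2*m+1 choose k) * (if odd k then ee k * ee (Suc (2*m+1) - k) else 0)) = ee (2*m+1) + S"
    proof -
      have e1: "ee (Suc 0) = 1" using ee1 by simp
      have e2: "\<And>k. Suc (2*m+1) - k = 2*m+2-k" by simp
      show ?thesis unfolding S_def sum_atMost_split_last e2 by (simp add: e1)
    qed
    finally show ?thesis using A by simp
  qed
  show ?case using odd_part even_part by (simp add: q_def)
qed



lemma prod_sign:
  fixes D :: "nat \<Rightarrow> bool"
  assumes "finite I"
  shows "(0::real)^card {i\<in>I. odd i \<and> D i} * (-1)^card {i\<in>I. even i \<and> D i}
       = (\<Prod>i\<in>I. if D i then (if odd i then 0 else -1) else 1)"
  using assms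
proof (induction I rule: finite_induct)
  case empty
  then show ?case by simp
next
  case (insert j I)
  have fin1: "finite {i\<in>I. odd i \<and> D i}" "finite {i\<in>I. even i \<and> D i}" using insert by auto
  have "j \<notin> {i\<in>I. odd i \<and> D i}" "j \<notin> {i\<in>I. even i \<and> D i}" using insert by auto
  show ?case
  proof (cases "D j")
    case True
    show ?thesis
    proof (cases "odd j")
      case True
      then have e1: "{i\<in>insert j I. odd i \<and> D i} = insert j {i\<in>I. odd i \<and> D i}"
        and e2: "{i\<in>insert j I. even i \<and> D i} = {i\<in>I. even i \<and> D i}" using \<open>D j\<close> by auto
      show ?thesis unfolding e1 e2 using insert fin1 \<open>j \<notin> {i\<in>I. odd i \<and> D i}\<close> True \<open>D j\<close>
        by simp
    next
      case False
      then have e1: "{i\<in>insert j I. odd i \<and> D i} = {i\<in>I. odd i \<and> D i}"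
        and e2: "{i\<in>insert j I. even i \<and> D i} = insert j {i\<in>I. even i \<and> D i}" using \<open>D j\<close> by auto
      show ?thesis unfolding e1 e2 using insert fin1 \<open>j \<notin> {i\<in>I. even i \<and> D i}\<close> False \<open>D j\<close>
        by (simp add: algebra_simps)
    qed
  next
    case False
    then have e1: "{i\<in>insert j I. odd i \<and> D i} = {i\<in>I. odd i \<and> D i}"
      and e2: "{i\<in>insert j I. even i \<and> D i} = {i\<in>I. even i \<and> D i}" by auto
    show ?thesis unfolding e1 e2 using insert False by simp
  qed
qed

lemma prod_ind:
  fixes Q :: "nat \<Rightarrow> bool"
  assumes "finite I"
  shows "(\<Prod>i\<in>I. if Q i then 1 else 0 :: real) = (if \<forall>i\<in>I. Q i then 1 else 0)"
  using assms by (induction I rule: finite_induct) auto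

lemma A_ff: "A n 0 (-1) = ff n"
proof -
  have "0 ^ odes xs * (-1) ^ edes xs = wr c1 0 xs" for xs
  proof -
    define I where "I = {1..<length xs}"
    define D where "D i = (xs ! i < xs ! (i - 1))" for i
    have o: "odes xs = card {i\<in>I. odd i \<and> D i}"
      unfolding odes_def I_def D_def is_descent_def
      by (intro arg_cong[where f=card]) auto
    have e: "edes xs = card {i\<in>I. even i \<and> D i}"
      unfolding edes_def I_def D_def is_descent_def
      by (intro arg_cong[where f=card]) auto
    show ?thesis unfolding o e prod_sign[OF finite_atLeastLessThan[of 1 "length xs", folded I_def]]
      unfolding wr_prod I_def D_def c1_def by (intro prod.cong) auto
  qed
  then show ?thesis unfolding A_def ff_def FF_def perms_def by simp
qed

lemma euler_ee: "real (euler_num n) = ee n"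
proof -
  have "(if alternating xs then 1 else 0) = wr c2 0 xs" for xs
  proof -
    have "wr c2 0 xs = (\<Prod>i\<in>{1..<length xs}. if (odd i \<longrightarrow> xs ! i < xs ! (i - 1)) \<and> (even i \<longrightarrow> xs ! (i - 1) < xs ! i) then 1 else 0)"
      unfolding wr_prod c2_def by simp
    also have "\<dots> = (if alternating xs then 1 else 0)"
      unfolding prod_ind[OF finite_atLeastLessThan] alternating_def by simp
    finally show ?thesis by simp
  qed
  moreover have "real (euler_num n) = (\<Sum>xs\<in>perms n. if alternating xs then 1 else 0)"
  proof -
    have "{xs\<in>perms n. alternating xs} = perms n \<inter> Collect alternating" by auto
    then show ?thesis unfolding euler_num_def by (simp add: sum.If_cases perms_def)
  qed
  ultimately show ?thesis unfolding ee_def FF_def perms_def by simp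
qed

theorem lemma3p4:
  fixes m :: nat
  shows "A (2*m+1) 0 (-1) = (-1)^m * real (euler_num (2*m+1)) / 2^m \<and>
         A (2*m+2) 0 (-1) = (-1)^m * real (euler_num (2*m+3)) / 2^(m+1)"
  unfolding A_ff euler_ee using main_ind[of m] by simp


end
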